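(* Let $\mathcal K$ be an abstract Krivine structure, and let $\mathsf E=\mathsf S(\mathsf K(\mathsf S\mathsf K\mathsf K))$. For all $P\subseteq\Pi$ and $L\subseteq\Lambda$: (1) $\mathsf E\mathsf E\perp\rho$ for every $\rho\in {}^\perp P\leadsto_\bullet\big(L\leadsto_\bullet(P\,\clubsuit\,L)\big)$; (2) $P\,\clubsuit\,L\subseteq(\{\mathsf E\mathsf E\}^\perp\ast_\bullet{}^\perp P)\ast_\bullet L\subseteq\big(\{\mathsf E\mathsf E t:t\in{}^\perp P\}\big)^\perp\ast_\bullet L$.
   Context: An abstract Krivine structure $\mathcal K$ consists of sets $\Lambda$ (terms), $\Pi$ (stacks), a relation $\perp\subseteq\Lambda\times\Pi$ (write $t\perp\pi$), a map $\mathrm{push}:\Lambda\times\Pi\to\Pi$ written $t\cdot\pi$ (associating to the right: $t\cdot s\cdot\pi=t\cdot(s\cdot\pi)$), a map $\mathrm{app}:\Lambda\times\Lambda\to\Lambda$ written $ts$ (associating to the left), a subset $\mathrm{QP}\subseteq\Lambda$ closed under application, and $\mathsf K,\mathsf S\in\mathrm{QP}$ such that for all $t,s,u\in\Lambda$, $\pi\in\Pi$: (a) $t\perp s\cdot\pi$ implies $ts\perp\pi$; (b) $t\perp\pi$ implies $\mathsf K\perp t\cdot s\cdot\pi$; (c) $tu(su)\perp\pi$ implies $\mathsf S\perp t\cdot s\cdot u\cdot\pi$. Polars: $L^\perp=\{\pi:\forall t\in L,\ t\perp\pi\}$, ${}^\perp P=\{t:\forall\pi\in P,\ t\perp\pi\}$;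 $\overline P=({}^\perp P)^\perp$; $\widehat P=\bigcup_{\pi\in P}\overline{\{\pi\}}$. For $L\subseteq\Lambda$, $P\subseteq\Pi$: $L\leadsto P=\{t\cdot\pi:t\in L,\pi\in P\}$, $L\leadsto_\bullet P=\widehat{L\leadsto P}$, $P\ast_\bullet L=\{\pi: t\cdot\pi'\in P\ \forall t\in L,\ \pi'\in\overline{\{\pi\}}\}$, $P\,\clubsuit\,L=(\{t\ell:t\in{}^\perp P,\ \ell\in L\})^\perp$. *)

theory Defs
  imports Main
begin

text \<open>Abstract Krivine structure: terms of type 'l (Lambda), stacks of type 'p (Pi),
  orthogonality perp, push, app, quasi-proofs QP, combinators K and S.\<close>

definition AKS :: "('l \<Rightarrow> 'p \<Rightarrow> bool) \<Rightarrow> ('l \<Rightarrow> 'p \<Rightarrow> 'p) \<Rightarrow> ('l \<Rightarrow> 'l \<Rightarrow> 'l)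
    \<Rightarrow> 'l set \<Rightarrow> 'l \<Rightarrow> 'l \<Rightarrow> bool" where
  "AKS perp push app QP K S \<longleftrightarrow>
     (\<forall>t\<in>QP. \<forall>s\<in>QP. app t s \<in> QP) \<and> K \<in> QP \<and> S \<in> QP \<and>
     (\<forall>t s \<pi>. perp t (push s \<pi>) \<longrightarrow> perp (app t s) \<pi>) \<and>
     (\<forall>t s \<pi>. perp t \<pi> \<longrightarrow> perp K (push t (push s \<pi>))) \<and>
     (\<forall>t s u \<pi>. perp (app (app t u) (app s u)) \<pi> \<longrightarrow> perp S (push t (push s (push u \<pi>))))"

definition lpolar :: "('l \<Rightarrow> 'p \<Rightarrow> bool) \<Rightarrow> 'l set \<Rightarrow> 'p set" where
  "lpolar perp L = {\<pi>. \<forall>t\<in>L. perp t \<pi>}"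

definition rpolar :: "('l \<Rightarrow> 'p \<Rightarrow> bool) \<Rightarrow> 'p set \<Rightarrow> 'l set" where
  "rpolar perp P = {t. \<forall>\<pi>\<in>P. perp t \<pi>}"

definition bclos :: "('l \<Rightarrow> 'p \<Rightarrow> bool) \<Rightarrow> 'p set \<Rightarrow> 'p set" where
  "bclos perp P = lpolar perp (rpolar perp P)"

definition hatc :: "('l \<Rightarrow> 'p \<Rightarrow> bool) \<Rightarrow> 'p set \<Rightarrow> 'p set" where
  "hatc perp P = (\<Union>\<pi>\<in>P. bclos perp {\<pi>})"

definition arr :: "('l \<Rightarrow> 'p \<Rightarrow> 'p) \<Rightarrow> 'l set \<Rightarrow> 'p set \<Rightarrow> 'p set" where
  "arr push L P = {push t \<pi> | t \<pi>. t \<in> L \<and> \<pi> \<in> P}"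

definition arrb :: "('l \<Rightarrow> 'p \<Rightarrow> bool) \<Rightarrow> ('l \<Rightarrow> 'p \<Rightarrow> 'p) \<Rightarrow> 'l set \<Rightarrow> 'p set \<Rightarrow> 'p set" where
  "arrb perp push L P = hatc perp (arr push L P)"

definition astb :: "('l \<Rightarrow> 'p \<Rightarrow> bool) \<Rightarrow> ('l \<Rightarrow> 'p \<Rightarrow> 'p) \<Rightarrow> 'p set \<Rightarrow> 'l set \<Rightarrow> 'p set" where
  "astb perp push P L = {\<pi>. \<forall>t\<in>L. \<forall>\<pi>'\<in>bclos perp {\<pi>}. push t \<pi>' \<in> P}"

definition club :: "('l \<Rightarrow> 'p \<Rightarrow> bool) \<Rightarrow> ('l \<Rightarrow> 'l \<Rightarrow> 'l) \<Rightarrow> 'p set \<Rightarrow> 'l set \<Rightarrow> 'p set" where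
  "club perp app P L = lpolar perp {app t l | t l. t \<in> rpolar perp P \<and> l \<in> L}"

end

theory Submission
  imports Defs
begin

lemma bclos_single: "x \<in> bclos perp {\<pi>} \<longleftrightarrow> (\<forall>t. perp t \<pi> \<longrightarrow> perp t x)"
  by (auto simp: bclos_def lpolar_def rpolar_def)

theorem mainTheorem5:
  fixes perp :: "'l \<Rightarrow> 'p \<Rightarrow> bool" and push :: "'l \<Rightarrow> 'p \<Rightarrow> 'p"
    and app :: "'l \<Rightarrow> 'l \<Rightarrow> 'l" and QP :: "'l set" and K S :: 'l
    and P :: "'p set" and L :: "'l set"
  assumes "AKS perp push app QP K S"
  defines "E \<equiv> app S (app K (app (app S K) K))"
  shows "(\<forall>\<rho>\<in>arrb perp push (rpolar perp P) (arrb perp push L (club perp app P L)).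
            perp (app E E) \<rho>)
       \<and> club perp app P L
           \<subseteq> astb perp push (astb perp push (lpolar perp {app E E}) (rpolar perp P)) L
       \<and> astb perp push (astb perp push (lpolar perp {app E E}) (rpolar perp P)) L
           \<subseteq> astb perp push (lpolar perp {app (app E E) t | t. t \<in> rpolar perp P}) L"
proof -
  have A: "\<And>t s \<pi>. perp t (push s \<pi>) \<Longrightarrow> perp (app t s) \<pi>"
   and Kr: "\<And>t s \<pi>. perp t \<pi> \<Longrightarrow> perp K (push t (push s \<pi>))"
   and Sr: "\<And>t s u \<pi>. perp (app (app t u) (app s u)) \<pi> \<Longrightarrow> perp S (push t (push s (push u \<pi>)))"
    using assms(1) unfolding AKS_def by blast+
  have Ek: "perp E (push t (push s \<pi>))" if h: "perp (app t s) \<pi>" for t s \<pi>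
  proof -
    have "perp K (push (app t s) (push (app K (app t s)) \<pi>))" using Kr h by blast
    then have "perp S (push K (push K (push (app t s) \<pi>)))" using Sr A by blast
    then have "perp (app (app S K) K) (push (app t s) \<pi>)" using A by blast
    then have "perp K (push (app (app S K) K) (push s (push (app t s) \<pi>)))" using Kr by blast
    then have "perp (app K (app (app S K) K)) (push s (push (app t s) \<pi>))" using A by blast
    then have "perp (app (app (app K (app (app S K) K)) s) (app t s)) \<pi>" using A by blast
    then have "perp S (push (app K (app (app S K) K)) (push t (push s \<pi>)))" using Sr by blast
    then show ?thesis unfolding E_def using A by blast
  qed
  have EE: "perp (app E E) (push t (push s \<pi>))" if h: "perp (app t s) \<pi>" for t s \<pi>
  proof -
    have "perp (app E t) (push s \<pi>)" using Ek[OF h] A by blast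
    then show ?thesis using Ek A by blast
  qed
  have EEt: "perp (app E t) \<sigma>" if "\<sigma> \<in> bclos perp {push s \<pi>}" "perp (app t s) \<pi>" for t s \<pi> \<sigma>
    using that Ek A unfolding bclos_single by blast
  show ?thesis
  proof (intro conjI ballI subsetI)
    fix \<rho> assume "\<rho> \<in> arrb perp push (rpolar perp P) (arrb perp push L (club perp app P L))"
    then obtain t \<sigma> where t: "t \<in> rpolar perp P" and \<sigma>: "\<sigma> \<in> arrb perp push L (club perp app P L)"
      and \<rho>: "\<rho> \<in> bclos perp {push t \<sigma>}"
      unfolding arrb_def hatc_def arr_def by blast
    from \<sigma> obtain l \<pi> where l: "l \<in> L" and \<pi>: "\<pi> \<in> club perp app P L"
      and s: "\<sigma> \<in> bclos perp {push l \<pi>}"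
      unfolding arrb_def hatc_def arr_def by blast
    have "perp (app t l) \<pi>" using \<pi> t l unfolding club_def lpolar_def by blast
    then have "perp (app E t) \<sigma>" using EEt s by blast
    then have "perp (app E E) (push t \<sigma>)" using Ek A by blast
    then show "perp (app E E) \<rho>" using \<rho> unfolding bclos_single by blast
  next
    fix \<pi> assume \<pi>: "\<pi> \<in> club perp app P L"
    show "\<pi> \<in> astb perp push (astb perp push (lpolar perp {app E E}) (rpolar perp P)) L"
      unfolding astb_def
    proof (intro CollectI ballI)
      fix l \<pi>' t \<pi>'' assume l: "l \<in> L" and p1: "\<pi>' \<in> bclos perp {\<pi>}"
        and t: "t \<in> rpolar perp P" and p2: "\<pi>'' \<in> bclos perp {push l \<pi>'}"
      have "perp (app t l) \<pi>" using \<pi> t l unfolding club_def lpolar_def by blast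
      then have "perp (app t l) \<pi>'" using p1 unfolding bclos_single by blast
      then have "perp (app E t) \<pi>''" using EEt p2 by blast
      then have "perp (app E E) (push t \<pi>'')" using Ek A by blast
      then show "push t \<pi>'' \<in> lpolar perp {app E E}" unfolding lpolar_def by blast
    qed
  next
    fix \<pi> assume \<pi>: "\<pi> \<in> astb perp push (astb perp push (lpolar perp {app E E}) (rpolar perp P)) L"
    show "\<pi> \<in> astb perp push (lpolar perp {app (app E E) t | t. t \<in> rpolar perp P}) L"
      unfolding astb_def
    proof (intro CollectI ballI)
      fix l \<pi>' assume l: "l \<in> L" and p1: "\<pi>' \<in> bclos perp {\<pi>}"
      have h: "push l \<pi>' \<in> astb perp push (lpolar perp {app E E}) (rpolar perp P)"
        using \<pi> l p1 unfolding astb_def by blast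
      have self: "push l \<pi>' \<in> bclos perp {push l \<pi>'}" unfolding bclos_single by blast
      show "push l \<pi>' \<in> lpolar perp {app (app E E) t | t. t \<in> rpolar perp P}"
        unfolding lpolar_def
      proof (intro CollectI ballI)
        fix u assume "u \<in> {app (app E E) t | t. t \<in> rpolar perp P}"
        then obtain t where t: "t \<in> rpolar perp P" and u: "u = app (app E E) t" by blast
        have "perp (app E E) (push t (push l \<pi>'))"
          using h t self unfolding astb_def lpolar_def by blast
        then show "perp u (push l \<pi>')" using A u by blast
      qed
    qed
  qed
qed

end
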